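(* $M(5,2,2)\le 7$.
   Context: All measures are probability measures on $\mathbb{R}^d$ absolutely continuous with respect to Lebesgue measure. A convex partition of $\mathbb{R}^d$ into $n$ parts is an ordered tuple $(K_1,\dots,K_n)$ of closed convex sets with union $\mathbb{R}^d$ and pairwise disjoint interiors (some parts may be empty). $M(n,r,d)$ is the largest integer $M$ such that for any $M$ measures $\mu_1,\dots,\mu_M$ on $\mathbb{R}^d$ there is a convex partition $(K_1,\dots,K_n)$ of $\mathbb{R}^d$ into $n$ parts and a map $\ell\colon[n]\to[r]$ with $\mu_j\big(\bigcup_{i\in\ell^{-1}(s)}K_i\big)=\tfrac1r$ for all $1\le j\le M$ and $1\le s\le r$. *)

theory Defs
  imports "HOL-Probability.Probability"
begin

definition ac_prob_measure :: "'a::euclidean_space measure \<Rightarrow> bool" where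
  "ac_prob_measure \<mu> \<longleftrightarrow> sets \<mu> = sets borel \<and> prob_space \<mu> \<and> absolutely_continuous lborel \<mu>"

definition convex_partition :: "nat \<Rightarrow> (nat \<Rightarrow> 'a::euclidean_space set) \<Rightarrow> bool" where
  "convex_partition n K \<longleftrightarrow>
     (\<forall>i<n. closed (K i) \<and> convex (K i)) \<and> (\<Union>i<n. K i) = UNIV \<and>
     (\<forall>i<n. \<forall>j<n. i \<noteq> j \<longrightarrow> interior (K i) \<inter> interior (K j) = {})"

definition equipart_prop :: "nat \<Rightarrow> nat \<Rightarrow> 'a::euclidean_space itself \<Rightarrow> nat \<Rightarrow> bool" where
  "equipart_prop n r _ m \<longleftrightarrow>
     (\<forall>\<mu> :: nat \<Rightarrow> 'a measure. (\<forall>j<m. ac_prob_measure (\<mu> j)) \<longrightarrow>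
        (\<exists>K lab. convex_partition n K \<and> (\<forall>i<n. lab i < r) \<and>
           (\<forall>j<m. \<forall>s<r. measure (\<mu> j) (\<Union>i\<in>{i. i < n \<and> lab i = s}. K i) = 1 / real r)))"

text \<open>M(n,r,d), the dimension d given by the type 'a.\<close>
definition M_val :: "nat \<Rightarrow> nat \<Rightarrow> 'a::euclidean_space itself \<Rightarrow> nat" where
  "M_val n r T = (GREATEST m. equipart_prop n r T m)"

end

theory Submission imports Defs begin

definition orr :: "real \<Rightarrow> real \<Rightarrow> real \<Rightarrow> real \<Rightarrow> real \<Rightarrow> real \<Rightarrow> real" where
  "orr a1 a2 b1 b2 c1 c2 = (b1-a1)*(c2-a2)-(b2-a2)*(c1-a1)"

lemma in_hull3:
  fixes x y z q :: "real^2"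
  defines "D \<equiv> orr (x$1) (x$2) (y$1) (y$2) (z$1) (z$2)"
  assumes D: "D \<noteq> 0"
    and u: "orr (q$1) (q$2) (y$1) (y$2) (z$1) (z$2) / D \<ge> 0"
    and v: "orr (x$1) (x$2) (q$1) (q$2) (z$1) (z$2) / D \<ge> 0"
    and w: "orr (x$1) (x$2) (y$1) (y$2) (q$1) (q$2) / D \<ge> 0"
  shows "q \<in> convex hull {x,y,z}"
proof -
  define u where "u = orr (q$1) (q$2) (y$1) (y$2) (z$1) (z$2) / D"
  define v where "v = orr (x$1) (x$2) (q$1) (q$2) (z$1) (z$2) / D"
  define w where "w = orr (x$1) (x$2) (y$1) (y$2) (q$1) (q$2) / D"
  have id1: "orr (q$1) (q$2) (y$1) (y$2) (z$1) (z$2) + orr (x$1) (x$2) (q$1) (q$2) (z$1) (z$2)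
     + orr (x$1) (x$2) (y$1) (y$2) (q$1) (q$2) = D"
    unfolding D_def orr_def by algebra
  have id2: "orr (q$1) (q$2) (y$1) (y$2) (z$1) (z$2) * x$k + orr (x$1) (x$2) (q$1) (q$2) (z$1) (z$2) * y$k
     + orr (x$1) (x$2) (y$1) (y$2) (q$1) (q$2) * z$k = D * q$k" for k
  proof -
    have "k = 1 \<or> k = 2" by (rule exhaust_2)
    moreover have "?thesis" if "k = 1" unfolding that D_def orr_def by algebra
    moreover have "?thesis" if "k = 2" unfolding that D_def orr_def by algebra
    ultimately show ?thesis by blast
  qed
  have s: "u + v + w = 1" using D id1 unfolding u_def v_def w_def
    by (simp add: add_divide_distrib[symmetric])
  have "(u *\<^sub>R x + v *\<^sub>R y + w *\<^sub>R z) $ k = q $ k" for k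
  proof -
    have "(u *\<^sub>R x + v *\<^sub>R y + w *\<^sub>R z) $ k = (D * q$k) / D"
      unfolding id2[of k, symmetric] u_def v_def w_def by (simp add: add_divide_distrib)
    then show ?thesis using D by simp
  qed
  then have e: "q = u *\<^sub>R x + v *\<^sub>R y + w *\<^sub>R z" by (simp add: vec_eq_iff)
  have p: "0 \<le> u" "0 \<le> v" "0 \<le> w" using u v w unfolding u_def v_def w_def by auto
  show ?thesis unfolding convex_hull_3 using s e p by blast
qed

lemma abs_prod_le: "\<bar>a\<bar> \<le> A \<Longrightarrow> \<bar>b\<bar> \<le> B \<Longrightarrow> \<bar>a*b\<bar> \<le> A*(B::real)"
  by (simp add: abs_mult mult_mono')

lemma tri6: "\<bar>A+B+C-D-E-(F::real)\<bar> \<le> \<bar>A\<bar>+\<bar>B\<bar>+\<bar>C\<bar>+\<bar>D\<bar>+\<bar>E\<bar>+\<bar>F\<bar>"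
proof -
  have "\<bar>A+B+C-D-E-F\<bar> \<le> \<bar>A+B+C-D-E\<bar> + \<bar>F\<bar>" by (rule abs_triangle_ineq4)
  also have "\<bar>A+B+C-D-E\<bar> \<le> \<bar>A+B+C-D\<bar> + \<bar>E\<bar>" by (rule abs_triangle_ineq4)
  also have "\<bar>A+B+C-D\<bar> \<le> \<bar>A+B+C\<bar> + \<bar>D\<bar>" by (rule abs_triangle_ineq4)
  also have "\<bar>A+B+C\<bar> \<le> \<bar>A+B\<bar> + \<bar>C\<bar>" by (rule abs_triangle_ineq)
  also have "\<bar>A+B\<bar> \<le> \<bar>A\<bar> + \<bar>B\<bar>" by (rule abs_triangle_ineq)
  finally show ?thesis by simp
qed
lemma pert:
  fixes a1 a2 b1 b2 c1 c2 x1 x2 y1 y2 z1 z2 :: real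
  assumes "\<bar>x1-a1\<bar> \<le> 1/100" "\<bar>x2-a2\<bar> \<le> 1/100" "\<bar>y1-b1\<bar> \<le> 1/100" "\<bar>y2-b2\<bar> \<le> 1/100"
    "\<bar>z1-c1\<bar> \<le> 1/100" "\<bar>z2-c2\<bar> \<le> 1/100"
    "\<bar>b1-a1\<bar> \<le> 6" "\<bar>b2-a2\<bar> \<le> 6" "\<bar>c1-a1\<bar> \<le> 6" "\<bar>c2-a2\<bar> \<le> 6"
  shows "\<bar>orr x1 x2 y1 y2 z1 z2 - orr a1 a2 b1 b2 c1 c2\<bar> \<le> 1/2"
proof -
  define e1 where "e1 = (y1 - x1) - (b1 - a1)"
  define e2 where "e2 = (y2 - x2) - (b2 - a2)"
  define f1 where "f1 = (z1 - x1) - (c1 - a1)"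
  define f2 where "f2 = (z2 - x2) - (c2 - a2)"
  have E: "\<bar>e1\<bar> \<le> 1/50" "\<bar>e2\<bar> \<le> 1/50" "\<bar>f1\<bar> \<le> 1/50" "\<bar>f2\<bar> \<le> 1/50"
  proof -
    have t: "\<bar>(u - v) - (w - r)\<bar> \<le> \<bar>u - w\<bar> + \<bar>v - r\<bar>" for u v w r :: real
    proof -
      have "(u - v) - (w - r) = (u - w) - (v - r)" by simp
      then show ?thesis using abs_triangle_ineq4[of "u - w" "v - r"] by simp
    qed
    show "\<bar>e1\<bar> \<le> 1/50" using t[of y1 x1 b1 a1] assms(1,3) unfolding e1_def by linarith
    show "\<bar>e2\<bar> \<le> 1/50" using t[of y2 x2 b2 a2] assms(2,4) unfolding e2_def by linarith
    show "\<bar>f1\<bar> \<le> 1/50" using t[of z1 x1 c1 a1] assms(1,5) unfolding f1_def by linarith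
    show "\<bar>f2\<bar> \<le> 1/50" using t[of z2 x2 c2 a2] assms(2,6) unfolding f2_def by linarith
  qed
  have eq: "orr x1 x2 y1 y2 z1 z2 - orr a1 a2 b1 b2 c1 c2 =
     (b1-a1)*f2 + e1*(c2-a2) + e1*f2 - (b2-a2)*f1 - e2*(c1-a1) - e2*f1"
    unfolding orr_def e1_def e2_def f1_def f2_def by (simp add: algebra_simps)
  have "\<bar>(b1-a1)*f2\<bar> \<le> 6*(1/50)" by (rule abs_prod_le[OF assms(7) E(4)])
  moreover have "\<bar>e1*(c2-a2)\<bar> \<le> (1/50)*6" by (rule abs_prod_le[OF E(1) assms(10)])
  moreover have "\<bar>e1*f2\<bar> \<le> (1/50)*(1/50)" by (rule abs_prod_le[OF E(1) E(4)])
  moreover have "\<bar>(b2-a2)*f1\<bar> \<le> 6*(1/50)" by (rule abs_prod_le[OF assms(8) E(3)])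
  moreover have "\<bar>e2*(c1-a1)\<bar> \<le> (1/50)*6" by (rule abs_prod_le[OF E(2) assms(9)])
  moreover have "\<bar>e2*f1\<bar> \<le> (1/50)*(1/50)" by (rule abs_prod_le[OF E(2) E(3)])
  ultimately show ?thesis unfolding eq using tri6[of "(b1-a1)*f2" "e1*(c2-a2)" "e1*f2" "(b2-a2)*f1" "e2*(c1-a1)" "e2*f1"] by linarith
qed


lemma robust_hull:
  fixes x y z q :: "real^2" and pa qa pb qb pc qc pd qd :: real
  assumes "\<bar>x$1-pa\<bar> \<le> 1/100" "\<bar>x$2-qa\<bar> \<le> 1/100" "\<bar>y$1-pb\<bar> \<le> 1/100" "\<bar>y$2-qb\<bar> \<le> 1/100"
    "\<bar>z$1-pc\<bar> \<le> 1/100" "\<bar>z$2-qc\<bar> \<le> 1/100" "\<bar>q$1-pd\<bar> \<le> 1/100" "\<bar>q$2-qd\<bar> \<le> 1/100"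
    and B: "0 \<le> pa" "pa \<le> 6" "0 \<le> qa" "qa \<le> 6" "0 \<le> pb" "pb \<le> 6" "0 \<le> qb" "qb \<le> 6"
      "0 \<le> pc" "pc \<le> 6" "0 \<le> qc" "qc \<le> 6" "0 \<le> pd" "pd \<le> 6" "0 \<le> qd" "qd \<le> 6"
    and S: "(orr pa qa pb qb pc qc \<ge> 1 \<and> orr pd qd pb qb pc qc \<ge> 1 \<and> orr pa qa pd qd pc qc \<ge> 1 \<and> orr pa qa pb qb pd qd \<ge> 1)
       \<or> (orr pa qa pb qb pc qc \<le> -1 \<and> orr pd qd pb qb pc qc \<le> -1 \<and> orr pa qa pd qd pc qc \<le> -1 \<and> orr pa qa pb qb pd qd \<le> -1)"
  shows "q \<in> convex hull {x,y,z}"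
proof -
  have p1: "\<bar>orr (x$1) (x$2) (y$1) (y$2) (z$1) (z$2) - orr pa qa pb qb pc qc\<bar> \<le> 1/2"
    by (rule pert[OF assms(1-6)]) (use B in \<open>auto simp: abs_le_iff\<close>)
  have p2: "\<bar>orr (q$1) (q$2) (y$1) (y$2) (z$1) (z$2) - orr pd qd pb qb pc qc\<bar> \<le> 1/2"
    by (rule pert[OF assms(7,8,3,4,5,6)]) (use B in \<open>auto simp: abs_le_iff\<close>)
  have p3: "\<bar>orr (x$1) (x$2) (q$1) (q$2) (z$1) (z$2) - orr pa qa pd qd pc qc\<bar> \<le> 1/2"
    by (rule pert[OF assms(1,2,7,8,5,6)]) (use B in \<open>auto simp: abs_le_iff\<close>)
  have p4: "\<bar>orr (x$1) (x$2) (y$1) (y$2) (q$1) (q$2) - orr pa qa pb qb pd qd\<bar> \<le> 1/2"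
    by (rule pert[OF assms(1-4,7,8)]) (use B in \<open>auto simp: abs_le_iff\<close>)
  have ge: "X \<ge> 1/2" if "\<bar>X - c\<bar> \<le> 1/2" "c \<ge> 1" for X c :: real using that unfolding abs_le_iff by linarith
  have le: "X \<le> -1/2" if "\<bar>X - c\<bar> \<le> 1/2" "c \<le> -1" for X c :: real using that unfolding abs_le_iff by linarith
  define DD where "DD = orr (x$1) (x$2) (y$1) (y$2) (z$1) (z$2)"
  define UU where "UU = orr (q$1) (q$2) (y$1) (y$2) (z$1) (z$2)"
  define VV where "VV = orr (x$1) (x$2) (q$1) (q$2) (z$1) (z$2)"
  define WW where "WW = orr (x$1) (x$2) (y$1) (y$2) (q$1) (q$2)"
  have "(DD \<ge> 1/2 \<and> UU \<ge> 1/2 \<and> VV \<ge> 1/2 \<and> WW \<ge> 1/2) \<or> (DD \<le> -1/2 \<and> UU \<le> -1/2 \<and> VV \<le> -1/2 \<and> WW \<le> -1/2)"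
    using S
  proof (elim disjE conjE)
    assume "1 \<le> orr pa qa pb qb pc qc" "1 \<le> orr pd qd pb qb pc qc" "1 \<le> orr pa qa pd qd pc qc" "1 \<le> orr pa qa pb qb pd qd"
    then show ?thesis unfolding DD_def UU_def VV_def WW_def
      using ge[OF p1] ge[OF p2] ge[OF p3] ge[OF p4] by blast
  next
    assume "orr pa qa pb qb pc qc \<le> -1" "orr pd qd pb qb pc qc \<le> -1" "orr pa qa pd qd pc qc \<le> -1" "orr pa qa pb qb pd qd \<le> -1"
    then show ?thesis unfolding DD_def UU_def VV_def WW_def
      using le[OF p1] le[OF p2] le[OF p3] le[OF p4] by blast
  qed
  then have sg: "DD \<noteq> 0" "UU / DD \<ge> 0" "VV / DD \<ge> 0" "WW / DD \<ge> 0"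
    by (auto simp: zero_le_divide_iff)
  show ?thesis
    by (rule in_hull3) (use sg in \<open>simp_all add: DD_def UU_def VV_def WW_def\<close>)
qed

definition px :: "nat \<Rightarrow> real" where "px j = [2,4,1,5,3,4,1,2] ! j"
definition py :: "nat \<Rightarrow> real" where "py j = [3,0,0,2,6,1,3,1] ! j"
definition sq :: "nat \<Rightarrow> (real^2) set" where
  "sq j = {x. \<bar>x$1 - px j\<bar> \<le> 1/100 \<and> \<bar>x$2 - py j\<bar> \<le> 1/100}"

definition certs :: "(nat \<times> nat \<times> nat \<times> nat) list" where
  "certs = [(0,1,2,7),(1,3,4,5),(2,3,6,7),(2,4,5,7),(4,6,7,0),(1,3,7,5),(1,2,6,7),(0,2,3,7),
            (1,2,4,7),(1,3,6,5),(1,4,6,0),(2,3,4,7),(3,4,6,0)]"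

lemma px_b: "i < 8 \<Longrightarrow> 0 \<le> px i \<and> px i \<le> 6"
  unfolding px_def by (auto simp: less_Suc_eq numeral_eq_Suc)
lemma py_b: "i < 8 \<Longrightarrow> 0 \<le> py i \<and> py i \<le> 6"
  unfolding py_def by (auto simp: less_Suc_eq numeral_eq_Suc)


lemma certs_lt: "(i,j,k,l) \<in> set certs \<Longrightarrow> i < 8 \<and> j < 8 \<and> k < 8 \<and> l < 8"
  unfolding certs_def by auto

lemma certs_hull:
  assumes "(i,j,k,l) \<in> set certs" "x \<in> sq i" "y \<in> sq j" "z \<in> sq k" "q \<in> sq l"
  shows "q \<in> convex hull {x,y,z}"
proof (rule robust_hull[where pa="px i" and qa="py i" and pb="px j" and qb="py j" and pc="px k" and qc="py k"
      and pd="px l" and qd="py l"])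
  show "\<bar>x$1 - px i\<bar> \<le> 1/100" "\<bar>x$2 - py i\<bar> \<le> 1/100" "\<bar>y$1 - px j\<bar> \<le> 1/100" "\<bar>y$2 - py j\<bar> \<le> 1/100"
    "\<bar>z$1 - px k\<bar> \<le> 1/100" "\<bar>z$2 - py k\<bar> \<le> 1/100" "\<bar>q$1 - px l\<bar> \<le> 1/100" "\<bar>q$2 - py l\<bar> \<le> 1/100"
    using assms(2-5) unfolding sq_def by auto
  have lt: "i < 8" "j < 8" "k < 8" "l < 8" using certs_lt[OF assms(1)] by auto
  show "0 \<le> px i" "px i \<le> 6" "0 \<le> py i" "py i \<le> 6" "0 \<le> px j" "px j \<le> 6" "0 \<le> py j" "py j \<le> 6"
    "0 \<le> px k" "px k \<le> 6" "0 \<le> py k" "py k \<le> 6" "0 \<le> px l" "px l \<le> 6" "0 \<le> py l" "py l \<le> 6"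
    using px_b[OF lt(1)] px_b[OF lt(2)] px_b[OF lt(3)] px_b[OF lt(4)]
      py_b[OF lt(1)] py_b[OF lt(2)] py_b[OF lt(3)] py_b[OF lt(4)] by auto
  show "(orr (px i) (py i) (px j) (py j) (px k) (py k) \<ge> 1 \<and> orr (px l) (py l) (px j) (py j) (px k) (py k) \<ge> 1
       \<and> orr (px i) (py i) (px l) (py l) (px k) (py k) \<ge> 1 \<and> orr (px i) (py i) (px j) (py j) (px l) (py l) \<ge> 1)
     \<or> (orr (px i) (py i) (px j) (py j) (px k) (py k) \<le> -1 \<and> orr (px l) (py l) (px j) (py j) (px k) (py k) \<le> -1
       \<and> orr (px i) (py i) (px l) (py l) (px k) (py k) \<le> -1 \<and> orr (px i) (py i) (px j) (py j) (px l) (py l) \<le> -1)"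
    using assms(1) unfolding certs_def
    by (simp only: set_simps insert_iff empty_iff prod.inject)
       (elim disjE conjE FalseE; simp add: px_def py_def orr_def)
qed


lemma comb_disj: fixes b :: "nat \<Rightarrow> bool" shows
 "(b 0 = b 1 \<and> b 1 = b 2) \<or> (b 1 = b 3 \<and> b 3 = b 4) \<or> (b 2 = b 3 \<and> b 3 = b 6) \<or> (b 2=b 4 \<and> b 4=b 5) \<or> (b 4=b 6 \<and> b 6=b 7)
 \<or> (b 1=b 3 \<and> b 3=b 7) \<or> (b 1=b 2 \<and> b 2=b 6) \<or> (b 0=b 2 \<and> b 2=b 3) \<or> (b 1=b 2\<and>b 2=b 4) \<or> (b 1=b 3\<and>b 3=b 6) \<or> (b 1=b 4\<and>b 4=b 6)
 \<or> (b 2=b 3\<and>b 3=b 4) \<or> (b 3=b 4\<and>b 4=b 6)"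
  by (cases "b 0"; cases "b 1"; cases "b 2"; cases "b 3"; cases "b 4"; cases "b 5"; cases "b 6"; cases "b 7"; simp)

lemma comb_bool: fixes b :: "nat \<Rightarrow> bool" shows "\<exists>(i,j,k,l)\<in>set certs. b i = b j \<and> b j = b k"
  using comb_disj[of b] unfolding certs_def
  by simp



definition mu :: "nat \<Rightarrow> (real^2) measure" where "mu j = uniform_measure lborel (sq j)"

lemma sq_closed: "closed (sq j)"
  unfolding sq_def by (intro closed_Collect_conj closed_Collect_le continuous_intros)

lemma sq_bounded: "bounded (sq j)"
proof -
  have "norm x \<le> \<bar>px j\<bar> + \<bar>py j\<bar> + 1" if "x \<in> sq j" for x
  proof -
    have "norm x \<le> (\<Sum>i\<in>UNIV. \<bar>x$i\<bar>)" by (rule norm_le_l1_cart)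
    also have "\<dots> = \<bar>x$1\<bar> + \<bar>x$2\<bar>" by (simp add: UNIV_2)
    also have "\<dots> \<le> \<bar>px j\<bar> + \<bar>py j\<bar> + 1" using that unfolding sq_def mem_Collect_eq by arith
    finally show ?thesis .
  qed
  then show ?thesis unfolding bounded_iff by blast
qed

lemma sq_borel: "sq j \<in> sets lborel"
  using sq_closed by (simp add: borel_closed)

lemma sq_borel2[measurable]: "sq j \<in> sets borel"
  using sq_closed by (simp add: borel_closed)

lemma ball_sq: "ball (vector [px j, py j]) (1/100) \<subseteq> sq j"
proof
  fix x :: "real^2" assume "x \<in> ball (vector [px j, py j]) (1/100)"
  then have d: "norm (x - vector [px j, py j]) < 1/100" by (simp add: dist_norm norm_minus_commute)
  have "\<bar>(x - vector [px j, py j]) $ i\<bar> \<le> norm (x - vector [px j, py j])" for i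
    by (rule component_le_norm_cart)
  from this[of 1] this[of 2] d show "x \<in> sq j" unfolding sq_def by auto
qed

lemma sq_meas_pos: "measure lborel (sq j) > 0"
proof -
  have "emeasure lborel (sq j) < \<infinity>" using sq_bounded by (rule emeasure_bounded_finite)
  have "measure lborel (ball (vector [px j, py j] :: real^2) (1/100)) \<le> measure lborel (sq j)"
  proof (intro measure_mono_fmeasurable)
    show "sq j \<in> fmeasurable lborel" using sq_borel[of j] \<open>emeasure lborel (sq j) < \<infinity>\<close>
      by (simp add: fmeasurable_def)
  qed (auto simp: ball_sq)
  moreover have "measure lborel (ball (vector [px j, py j] :: real^2) (1/100)) > 0"
    by (rule content_ball_pos) simp
  ultimately show ?thesis by linarith
qed

lemma sq_em: "emeasure lborel (sq j) \<noteq> 0" "emeasure lborel (sq j) \<noteq> \<infinity>"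
proof -
  show "emeasure lborel (sq j) \<noteq> \<infinity>" using emeasure_bounded_finite[OF sq_bounded[of j]] by auto
  then show "emeasure lborel (sq j) \<noteq> 0" using sq_meas_pos[of j]
    by (metis less_irrefl measure_def zero_ennreal.rep_eq enn2real_0)
qed

lemma mu_ac: "ac_prob_measure (mu j)"
  unfolding ac_prob_measure_def mu_def
proof (intro conjI)
  show "sets (uniform_measure lborel (sq j)) = sets borel" by simp
  show "prob_space (uniform_measure lborel (sq j))" using sq_em by (rule prob_space_uniform_measure)
  show "absolutely_continuous lborel (uniform_measure lborel (sq j))"
    unfolding uniform_measure_def
    by (intro absolutely_continuousI_density) measurable
qed

lemma mu_meas: "A \<in> sets borel \<Longrightarrow> measure (mu j) A = measure lborel (sq j \<inter> A) / measure lborel (sq j)"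
  unfolding mu_def using sq_em by (subst measure_uniform_measure) auto


lemma card_le2:
  assumes "finite S" "card S \<le> 2" shows "\<exists>p q. S \<subseteq> {p,q}"
proof -
  have "card S = 0 \<or> card S = 1 \<or> card S = 2" using assms(2) by auto
  then show ?thesis
  proof (elim disjE)
    assume "card S = 0" then have "S = {}" using assms(1) by simp
    then show ?thesis by blast
  next
    assume "card S = 1" then obtain a where "S = {a}" by (rule card_1_singletonE)
    then show ?thesis by blast
  next
    assume "card S = 2" then obtain a b where "S = {a,b}" by (auto simp: card_2_iff)
    then show ?thesis by blast
  qed
qed

lemma no_equipart:
  fixes K :: "nat \<Rightarrow> (real^2) set" and lab :: "nat \<Rightarrow> nat"
  assumes cp: "convex_partition 5 K" and lab: "\<forall>i<5. lab i < 2"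
    and eq: "\<forall>j<8. \<forall>s<2. measure (mu j) (\<Union>i\<in>{i. i < 5 \<and> lab i = s}. K i) = 1 / real 2"
  shows False
proof -
  define C where "C s = {i. i < (5::nat) \<and> lab i = s}" for s
  define U where "U s = (\<Union>i\<in>C s. K i)" for s
  have Cfin: "finite (C s)" for s unfolding C_def by simp
  have Kcl: "i < 5 \<Longrightarrow> closed (K i)" "i < 5 \<Longrightarrow> convex (K i)" for i
    using cp unfolding convex_partition_def by auto
  have Ub: "U s \<in> sets borel" for s
  proof -
    have "closed (U s)" unfolding U_def using Cfin Kcl(1) unfolding C_def
      by (intro closed_UN) auto
    then show ?thesis by (simp add: borel_closed)
  qed
  have "C 0 \<union> C 1 = {..<5}" using lab unfolding C_def by auto
  moreover have "C 0 \<inter> C 1 = {}" unfolding C_def by auto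
  ultimately have "card (C 0) + card (C 1) = 5"
    using Cfin card_Un_disjoint[of "C 0" "C 1"] by simp
  then have c01: "card (C 0) \<le> 2 \<or> card (C 1) \<le> 2" by linarith
  obtain s where s: "s < 2" "card (C s) \<le> 2"
  proof (cases "card (C 0) \<le> 2")
    case True then show ?thesis using that[of 0] by simp
  next
    case False then show ?thesis using that[of 1] c01 by simp
  qed
  obtain p q where pq: "C s \<subseteq> {p,q}" using card_le2[OF Cfin s(2)] by blast
  have meas: "measure (mu j) (U s) = 1/2" if "j < 8" for j
    using eq that s(1) unfolding U_def C_def by simp
  have hit: "\<exists>c x. c \<in> C s \<and> x \<in> sq j \<and> x \<in> K c" if "j < 8" for j
  proof (rule ccontr)
    assume "\<not> ?thesis"
    then have "sq j \<inter> U s = {}" unfolding U_def by blast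
    then have "measure (mu j) (U s) = 0" using mu_meas[OF Ub] by simp
    with meas[OF that] show False by simp
  qed
  then obtain c x where cx: "\<And>j. j < 8 \<Longrightarrow> c j \<in> C s \<and> x j \<in> sq j \<and> x j \<in> K (c j)"
    by metis
  obtain i j k l where ijkl: "(i,j,k,l) \<in> set certs" and bb: "(c i = p) = (c j = p)" "(c j = p) = (c k = p)"
    using comb_bool[of "\<lambda>j. c j = p"] by auto
  have lt: "i < 8" "j < 8" "k < 8" "l < 8" using certs_lt[OF ijkl] by auto
  have cpq: "c t = p \<or> c t = q" if "t < 8" for t using cx[OF that] pq by auto
  have same: "c j = c i \<and> c k = c i"
  proof (cases "c i = p")
    case True
    then have "c j = p" using bb(1) by blast
    moreover then have "c k = p" using bb(2) by blast
    ultimately show ?thesis using True by simp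
  next
    case False
    then have "c j \<noteq> p" using bb(1) by blast
    moreover then have "c k \<noteq> p" using bb(2) by blast
    ultimately show ?thesis using False cpq[OF lt(1)] cpq[OF lt(2)] cpq[OF lt(3)] by metis
  qed
  have ci5: "c i < 5" using cx[OF lt(1)] unfolding C_def by auto
  have "convex hull {x i, x j, x k} \<subseteq> K (c i)"
    using cx[OF lt(1)] cx[OF lt(2)] cx[OF lt(3)] same Kcl(2)[OF ci5]
    by (intro hull_minimal) auto
  moreover have "sq l \<subseteq> convex hull {x i, x j, x k}"
    using certs_hull[OF ijkl] cx[OF lt(1)] cx[OF lt(2)] cx[OF lt(3)] by blast
  moreover have "K (c i) \<subseteq> U s" using cx[OF lt(1)] unfolding U_def by auto
  ultimately have "sq l \<inter> U s = sq l" by blast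
  then have "measure (mu l) (U s) = 1" using mu_meas[OF Ub] sq_meas_pos[of l] by simp
  with meas[OF lt(4)] show False by simp
qed

theorem mainTheorem6:
  shows "M_val 5 2 TYPE(real^2) \<le> 7"
proof -
  let ?P = "equipart_prop 5 2 TYPE(real^2)"
  have P0: "?P 0"
    unfolding equipart_prop_def
  proof (intro allI impI)
    fix \<mu> :: "nat \<Rightarrow> (real^2) measure"
    let ?K = "\<lambda>i::nat. if i = 0 then (UNIV :: (real^2) set) else {}"
    have "convex_partition 5 ?K" unfolding convex_partition_def
    proof (intro conjI allI impI)
      show "(\<Union>i<5. ?K i) = UNIV" by (auto intro!: exI[of _ 0])
    qed auto
    then show "\<exists>K lab. convex_partition 5 K \<and> (\<forall>i<5. lab i < (2::nat)) \<and>
        (\<forall>j<0. \<forall>s<2. measure (\<mu> j) (\<Union>i\<in>{i. i < 5 \<and> lab i = s}. K i) = 1 / real 2)"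
      by (intro exI[of _ ?K] exI[of _ "\<lambda>i. 0::nat"]) auto
  qed
  have bound: "m \<le> 7" if "?P m" for m
  proof (rule ccontr)
    assume "\<not> m \<le> 7"
    then have m8: "8 \<le> m" by simp
    have ac: "\<forall>j<m. ac_prob_measure (mu j)" using mu_ac by blast
    have imp: "(\<forall>j<m. ac_prob_measure (mu j)) \<longrightarrow> (\<exists>K lab. convex_partition 5 K \<and> (\<forall>i<5. lab i < (2::nat)) \<and>
           (\<forall>j<m. \<forall>s<(2::nat). measure (mu j) (\<Union>i\<in>{i. i < 5 \<and> lab i = s}. K i) = 1 / real 2))"
      using that unfolding equipart_prop_def by (rule spec)
    from imp ac have "\<exists>K lab. convex_partition 5 K \<and> (\<forall>i<5. lab i < (2::nat)) \<and>
           (\<forall>j<m. \<forall>s<(2::nat). measure (mu j) (\<Union>i\<in>{i. i < 5 \<and> lab i = s}. K i) = 1 / real 2)"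
      by (rule mp)
    then obtain K lab where "convex_partition 5 K" "\<forall>i<5. lab i < (2::nat)"
      "\<forall>j<m. \<forall>s<(2::nat). measure (mu j) (\<Union>i\<in>{i. i < 5 \<and> lab i = s}. K i) = 1 / real 2" by blast
    then show False using m8 by (intro no_equipart[of K lab]) auto
  qed
  have "?P (Greatest ?P)" by (rule GreatestI_nat[where P="equipart_prop 5 2 TYPE(real^2)", OF P0 bound])
  then show ?thesis unfolding M_val_def by (rule bound)
qed

end
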